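(* Let $T = T_d(I)$ be a balanced triangular region. The following statements hold. \begin{enumerate} \item Let $\tau$ and $\tau'$ be two lozenge tilings of $T$. Then their perfect matching signs are the same if and only if their lattice path signs are the same, that is, \[ \operatorname{sgn}_{\mathrm{pm}}(\tau) \cdot \operatorname{sgn}_{\mathrm{lp}}(\tau) = \operatorname{sgn}_{\mathrm{pm}}(\tau') \cdot \operatorname{sgn}_{\mathrm{lp}}(\tau'). \] \item In particular, we have that \[ |\det{Z(T)}| = |\det{N(T)}|. \] \end{enumerate}
   Context: Let $R=K[x,y,z]$ and $I\subset R$ a monomial ideal. The triangular region $\mathcal{T}_d$ is an equilateral triangle of side length $d$ subdivided into unit triangles; the downward-pointing unit triangles are labeled by the monomials of degree $d-2$ and the upward-pointing ones by the monomials of degree $d-1$ ($x^{d-1}$ at the top, $y^{d-1}$ bottom-left, $z^{d-1}$ bottom-right, and an upward triangle sharing an edge with a downward triangle has label equal to the downward label times a variable). $T_d(I)$ is obtained from $\mathcal{T}_d$ by removing the triangles whose labels lie in $I$. It is balanced if it has as many upward- as downward-pointing unit triangles. A lozenge is a union of two unit triangles sharing an edge; a lozenge tiling covers every triangle of $T$ by exactly one lozenge. Monomials are ordered by graded reverse-lexicographic order. $Z(T)$ is the bi-adjacency matrix of the bipartite graph whose vertices are the centers $B_1,\dots$ of the downward triangles and $W_1,\dots$ of the upward triangles of $T$ (each ordered by reverse-lex order of labels), with $Z(T)_{(i,j)}=1$ iff the triangles $B_i$ and $W_j$ share an edge. A tiling $\tau$ gives a perfect matching, i.e. a bijection $\pi$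 viewed as a permutation; the perfect matching sign is $\operatorname{sgn}_{\mathrm{pm}}(\tau):=\operatorname{sgn}(\pi)$. $L(T)$ is the set of midpoints of the edges of triangles of $T$ parallel to the upper-left boundary of $\mathcal{T}_d$, viewed as a sub-lattice of $\mathbb{Z}^2$ (steps East or Southeast). $A_1,\dots,A_m$ are the vertices of $L(T)$ lying only on upward-pointing triangles of $T$, and $E_1,\dots,E_m$ those lying only on downward-pointing triangles of $T$, each ordered from smallest to largest in reverse-lex order of the label of the upward triangle whose upper-left edge contains the vertex. $N(T)_{(i,j)}$ is the number of lattice paths in $\mathbb{Z}^2$ from $A_i$ to $E_j$. A tiling $\tau$ determines a family of non-intersecting lattice paths (joining the vertices of $L(T)$ on each lozenge); if the path starting at $A_i$ ends at $E_{\lambda(i)}$, the lattice path sign is $\operatorname{sgn}_{\mathrm{lp}}(\tau):=\operatorname{sgn}(\lambda)$. *)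

theory Defs
  imports "HOL-Combinatorics.Permutations" "Jordan_Normal_Form.Determinant"
begin

text \<open>A monomial x^a y^b z^c is represented by its exponent triple (a,b,c).
  A monomial ideal of K[x,y,z] is determined by the set of monomials it contains,
  which is exactly an upward closed set of exponent triples; we represent I by that set.\<close>

type_synonym mono = "nat \<times> nat \<times> nat"

definition monomial_ideal :: "mono set \<Rightarrow> bool" where
  "monomial_ideal I \<longleftrightarrow>
     (\<forall>a b c a' b' c'. (a,b,c) \<in> I \<longrightarrow> a \<le> a' \<longrightarrow> b \<le> b' \<longrightarrow> c \<le> c' \<longrightarrow> (a',b',c') \<in> I)"

fun mdeg :: "mono \<Rightarrow> nat" where
  "mdeg (a,b,c) = a + b + c"

fun times_x :: "mono \<Rightarrow> mono" where "times_x (a,b,c) = (Suc a, b, c)"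
fun times_y :: "mono \<Rightarrow> mono" where "times_y (a,b,c) = (a, Suc b, c)"
fun times_z :: "mono \<Rightarrow> mono" where "times_z (a,b,c) = (a, b, Suc c)"

text \<open>Graded reverse-lexicographic order (x > y > z) on monomials of the same degree:
  m < m' iff the last nonzero entry of m - m' is positive.\<close>
fun revlex_less :: "mono \<Rightarrow> mono \<Rightarrow> bool" where
  "revlex_less (a,b,c) (a',b',c') \<longleftrightarrow> mdeg (a,b,c) < mdeg (a',b',c') \<or>
     (mdeg (a,b,c) = mdeg (a',b',c') \<and> (c' < c \<or> (c = c' \<and> b' < b)))"

definition rl_nth :: "mono set \<Rightarrow> nat \<Rightarrow> mono" where
  "rl_nth S i = (THE m. m \<in> S \<and> card {m' \<in> S. revlex_less m' m} = i)"

datatype tri = Up mono | Down mono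

fun label :: "tri \<Rightarrow> mono" where
  "label (Up m) = m" | "label (Down m) = m"

definition tri_region :: "nat \<Rightarrow> tri set" where
  "tri_region d = {Up m | m. mdeg m + 1 = d} \<union> {Down m | m. mdeg m + 2 = d}"

definition T_region :: "nat \<Rightarrow> mono set \<Rightarrow> tri set" where
  "T_region d I = {t \<in> tri_region d. label t \<notin> I}"

definition up_labels :: "tri set \<Rightarrow> mono set" where
  "up_labels T = {m. Up m \<in> T}"

definition down_labels :: "tri set \<Rightarrow> mono set" where
  "down_labels T = {m. Down m \<in> T}"

definition balanced :: "tri set \<Rightarrow> bool" where
  "balanced T \<longleftrightarrow> card (up_labels T) = card (down_labels T)"

text \<open>Unit triangles sharing an edge: the downward triangle m shares its three edges with the
  upward triangles m x (top edge), m y (left edge) and m z (right edge).\<close>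
definition shares_edge :: "tri \<Rightarrow> tri \<Rightarrow> bool" where
  "shares_edge t t' \<longleftrightarrow>
     (\<exists>m. t = Down m \<and> t' \<in> {Up (times_x m), Up (times_y m), Up (times_z m)}) \<or>
     (\<exists>m. t' = Down m \<and> t \<in> {Up (times_x m), Up (times_y m), Up (times_z m)})"

definition lozenge :: "tri set \<Rightarrow> bool" where
  "lozenge L \<longleftrightarrow> (\<exists>t t'. shares_edge t t' \<and> L = {t, t'})"

definition lozenge_tiling :: "tri set \<Rightarrow> tri set set \<Rightarrow> bool" where
  "lozenge_tiling T \<tau> \<longleftrightarrow> (\<forall>L \<in> \<tau>. lozenge L \<and> L \<subseteq> T) \<and> (\<forall>t \<in> T. \<exists>!L. L \<in> \<tau> \<and> t \<in> L)"

definition B_tri :: "tri set \<Rightarrow> nat \<Rightarrow> mono" where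
  "B_tri T i = rl_nth (down_labels T) i"

definition W_tri :: "tri set \<Rightarrow> nat \<Rightarrow> mono" where
  "W_tri T j = rl_nth (up_labels T) j"

definition Z_mat :: "tri set \<Rightarrow> int mat" where
  "Z_mat T = mat (card (down_labels T)) (card (up_labels T))
     (\<lambda>(i,j). if shares_edge (Down (B_tri T i)) (Up (W_tri T j)) then 1 else 0)"

definition pm_perm :: "tri set \<Rightarrow> tri set set \<Rightarrow> nat \<Rightarrow> nat" where
  "pm_perm T \<tau> i = (if i < card (down_labels T)
      then (THE j. j < card (up_labels T) \<and> {Down (B_tri T i), Up (W_tri T j)} \<in> \<tau>) else i)"

definition sgn_pm :: "tri set \<Rightarrow> tri set set \<Rightarrow> int" where
  "sgn_pm T \<tau> = sign (pm_perm T \<tau>)"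

text \<open>Vertices of L(T) are midpoints of edges parallel to the upper-left boundary; each such
  edge is the upper-left edge of a unique upward triangle of \<T>_d, whose label u names the
  vertex.  The vertex u lies on the upward triangle u (if present in T) and on the downward
  triangle m with u = m z (if present in T).\<close>
definition on_up :: "tri set \<Rightarrow> mono \<Rightarrow> bool" where
  "on_up T u \<longleftrightarrow> Up u \<in> T"

definition on_down :: "tri set \<Rightarrow> mono \<Rightarrow> bool" where
  "on_down T u \<longleftrightarrow> (\<exists>m. Down m \<in> T \<and> u = times_z m)"

definition A_verts :: "tri set \<Rightarrow> mono set" where
  "A_verts T = {u. on_up T u \<and> \<not> on_down T u}"

definition E_verts :: "tri set \<Rightarrow> mono set" where
  "E_verts T = {u. on_down T u \<and> \<not> on_up T u}"

definition A_pt :: "tri set \<Rightarrow> nat \<Rightarrow> mono" where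
  "A_pt T i = rl_nth (A_verts T) i"

definition E_pt :: "tri set \<Rightarrow> nat \<Rightarrow> mono" where
  "E_pt T j = rl_nth (E_verts T) j"

text \<open>Identification of L(T) with a sub-lattice of Z^2: the vertex labeled x^a y^b z^c is the
  point (c, a).  Then the edge from m y to m z is an East step (1,0) and the edge from m x to
  m z is a Southeast step (1,-1).\<close>
fun lat_coord :: "mono \<Rightarrow> int \<times> int" where
  "lat_coord (a,b,c) = (int c, int a)"

text \<open>A lattice path is a list of steps: True = East (1,0), False = Southeast (1,-1).\<close>
definition path_end :: "int \<times> int \<Rightarrow> bool list \<Rightarrow> int \<times> int" where
  "path_end p ss = fold (\<lambda>s (x,y). if s then (x + 1, y) else (x + 1, y - 1)) ss p"

definition num_lattice_paths :: "int \<times> int \<Rightarrow> int \<times> int \<Rightarrow> nat" where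
  "num_lattice_paths p q = card {ss. path_end p ss = q}"

definition N_mat :: "tri set \<Rightarrow> int mat" where
  "N_mat T = mat (card (A_verts T)) (card (E_verts T))
     (\<lambda>(i,j). int (num_lattice_paths (lat_coord (A_pt T i)) (lat_coord (E_pt T j))))"

text \<open>The steps of the lattice paths determined by a tiling: a lozenge consisting of the
  downward triangle m and the upward triangle u = m x or u = m y joins the vertices u and m z.\<close>
definition lp_step :: "tri set set \<Rightarrow> (mono \<times> mono) set" where
  "lp_step \<tau> = {(u, times_z m) | u m. {Down m, Up u} \<in> \<tau> \<and> u \<noteq> times_z m}"

definition lp_perm :: "tri set \<Rightarrow> tri set set \<Rightarrow> nat \<Rightarrow> nat" where
  "lp_perm T \<tau> i = (if i < card (A_verts T)
      then (THE j. j < card (E_verts T) \<and> (A_pt T i, E_pt T j) \<in> (lp_step \<tau>)\<^sup>*) else i)"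

definition sgn_lp :: "tri set \<Rightarrow> tri set set \<Rightarrow> int" where
  "sgn_lp T \<tau> = sign (lp_perm T \<tau>)"

end

theory Submission
  imports Defs
begin


lemma revlex_irrefl: "\<not> revlex_less m m"
  by (cases m) auto

lemma revlex_trans: "revlex_less m1 m2 \<Longrightarrow> revlex_less m2 m3 \<Longrightarrow> revlex_less m1 m3"
  by (cases m1; cases m2; cases m3) auto

lemma revlex_total: "m1 \<noteq> m2 \<Longrightarrow> revlex_less m1 m2 \<or> revlex_less m2 m1"
  by (cases m1; cases m2) auto

lemma revlex_asym: "revlex_less m1 m2 \<Longrightarrow> \<not> revlex_less m2 m1"
  using revlex_trans revlex_irrefl by blast

definition rk :: "mono set \<Rightarrow> mono \<Rightarrow> nat" where
  "rk S m = card {m'\<in>S. revlex_less m' m}"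

lemma rk_mono:
  assumes "finite S" "m \<in> S" "revlex_less m m'"
  shows "rk S m < rk S m'"
  unfolding rk_def
proof (rule psubset_card_mono)
  show "finite {m'a \<in> S. revlex_less m'a m'}" using assms by simp
  show "{m' \<in> S. revlex_less m' m} \<subset> {m'a \<in> S. revlex_less m'a m'}"
    using assms revlex_trans revlex_irrefl by blast
qed

lemma rk_inj: "finite S \<Longrightarrow> inj_on (rk S) S"
  by (metis inj_onI nat_neq_iff revlex_total rk_mono)

lemma rk_lt: assumes "finite S" "m \<in> S" shows "rk S m < card S"
proof -
  have "{m'\<in>S. revlex_less m' m} \<subset> S" using assms revlex_irrefl by blast
  thus ?thesis unfolding rk_def using assms psubset_card_mono by blast
qed

lemma rk_bij: assumes "finite S" shows "bij_betw (rk S) S {0..<card S}"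
proof -
  have "rk S ` S \<subseteq> {0..<card S}" using rk_lt assms by auto
  moreover have "card (rk S ` S) = card S" using card_image rk_inj assms by blast
  ultimately have "rk S ` S = {0..<card S}"
    by (metis card_atLeastLessThan card_subset_eq finite_atLeastLessThan minus_nat.diff_0)
  thus ?thesis using rk_inj assms by (simp add: bij_betw_def)
qed

lemma rl_nth_eq: assumes "finite S" "i < card S"
  shows "rl_nth S i = inv_into S (rk S) i"
proof -
  have b: "bij_betw (rk S) S {0..<card S}" using rk_bij assms by blast
  have m: "inv_into S (rk S) i \<in> S" "rk S (inv_into S (rk S) i) = i"
    using b assms by (auto simp: bij_betw_def inv_into_into f_inv_into_f)
  show ?thesis unfolding rl_nth_def
  proof (rule the_equality)
    show "inv_into S (rk S) i \<in> S \<and> card {m' \<in> S. revlex_less m' (inv_into S (rk S) i)} = i"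
      using m by (simp add: rk_def)
    fix m assume "m \<in> S \<and> card {m' \<in> S. revlex_less m' m} = i"
    hence "m \<in> S" "rk S m = i" by (auto simp: rk_def)
    thus "m = inv_into S (rk S) i" using b by (metis bij_betw_def inv_into_f_f)
  qed
qed

lemma rl_nth_bij: assumes "finite S" shows "bij_betw (rl_nth S) {0..<card S} S"
proof -
  have "bij_betw (inv_into S (rk S)) {0..<card S} S" using rk_bij[OF assms] bij_betw_inv_into by blast
  thus ?thesis by (rule bij_betw_cong[THEN iffD1, rotated]) (use rl_nth_eq assms in auto)
qed

lemma rl_nth_in: "finite S \<Longrightarrow> i < card S \<Longrightarrow> rl_nth S i \<in> S"
  using rl_nth_bij bij_betwE by fastforce

lemma rl_nth_rk: assumes "finite S" "m \<in> S" shows "rl_nth S (rk S m) = m"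
  using rl_nth_eq[OF assms(1) rk_lt[OF assms]] rk_bij[OF assms(1)] assms
  by (simp add: bij_betw_def)

lemma rk_rl_nth: assumes "finite S" "i < card S" shows "rk S (rl_nth S i) = i"
  using rl_nth_eq[OF assms] rk_bij[OF assms(1)] assms
  by (simp add: bij_betw_def f_inv_into_f)

lemma rl_nth_mono: assumes "finite S" "i < j" "j < card S"
  shows "revlex_less (rl_nth S i) (rl_nth S j)"
proof -
  have i: "rl_nth S i \<in> S" "rk S (rl_nth S i) = i" using assms rl_nth_in rk_rl_nth by auto
  have j: "rl_nth S j \<in> S" "rk S (rl_nth S j) = j" using assms rl_nth_in rk_rl_nth by auto
  have "rl_nth S i \<noteq> rl_nth S j" using i j assms by auto
  moreover have "\<not> revlex_less (rl_nth S j) (rl_nth S i)"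
    using rk_mono[OF assms(1) j(1)] i j assms by fastforce
  ultimately show ?thesis using revlex_total by blast
qed

section \<open>Lattice paths\<close>

lemma path_end_eq: "path_end p ss = (fst p + int (length ss), snd p - int (length (filter Not ss)))"
  unfolding path_end_def
  by (induction ss arbitrary: p) (auto simp: case_prod_beta)

lemma path_end_Cons: "path_end p (s # ss) = path_end (if s then (fst p + 1, snd p) else (fst p + 1, snd p - 1)) ss"
  by (simp add: path_end_eq)

lemma finite_paths: "finite {ss. path_end p ss = q}"
proof (rule finite_subset)
  show "{ss. path_end p ss = q} \<subseteq> {ss. length ss = nat (fst q - fst p)}"
    by (auto simp: path_end_eq)
  show "finite {ss::bool list. length ss = nat (fst q - fst p)}"
    using finite_lists_length_eq[of "UNIV::bool set"] by simp
qed

lemma num_paths_rec: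
  "num_lattice_paths p q = (if p = q then 1 else 0)
     + num_lattice_paths (fst p + 1, snd p) q + num_lattice_paths (fst p + 1, snd p - 1) q"
proof -
  define S0 :: "bool list set" where "S0 = (if p = q then {[]} else {})"
  define S1 where "S1 = (Cons True) ` {ss. path_end (fst p + 1, snd p) ss = q}"
  define S2 where "S2 = (Cons False) ` {ss. path_end (fst p + 1, snd p - 1) ss = q}"
  have eq: "{ss. path_end p ss = q} = S0 \<union> S1 \<union> S2"
  proof (rule Set.set_eqI)
    fix ss show "ss \<in> {ss. path_end p ss = q} \<longleftrightarrow> ss \<in> S0 \<union> S1 \<union> S2"
    proof (cases ss)
      case Nil
      then show ?thesis by (auto simp: path_end_eq S0_def S1_def S2_def)
    next
      case (Cons s ss')
      then show ?thesis by (cases s) (auto simp: path_end_Cons S0_def S1_def S2_def)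
    qed
  qed
  have c1: "card S1 = num_lattice_paths (fst p + 1, snd p) q"
    unfolding num_lattice_paths_def S1_def by (rule card_image) auto
  have c2: "card S2 = num_lattice_paths (fst p + 1, snd p - 1) q"
    unfolding num_lattice_paths_def S2_def by (rule card_image) auto
  have f1: "finite S1" "finite S2" "finite S0" using finite_paths by (auto simp: S0_def S1_def S2_def)
  have "card (S0 \<union> S1 \<union> S2) = card (S0 \<union> S1) + card S2"
    by (rule card_Un_disjoint) (use f1 in \<open>auto simp: S0_def S1_def S2_def\<close>)
  also have "card (S0 \<union> S1) = card S0 + card S1"
    by (rule card_Un_disjoint) (use f1 in \<open>auto simp: S0_def S1_def S2_def\<close>)
  finally show ?thesis using c1 c2 eq unfolding num_lattice_paths_def by (simp add: S0_def)
qed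

lemma num_paths_zero1: "fst p + snd p > fst q + snd q \<Longrightarrow> num_lattice_paths p q = 0"
proof -
  assume a: "fst p + snd p > fst q + snd q"
  have "{ss. path_end p ss = q} = {}"
  proof (auto simp: path_end_eq)
    fix ss assume "q = (fst p + int (length ss), snd p - int (length (filter Not ss)))"
    hence "fst q = fst p + int (length ss)" "snd q = snd p - int (length (filter Not ss))" by auto
    moreover have "length (filter Not ss) \<le> length ss" by (rule length_filter_le)
    ultimately show False using a by linarith
  qed
  thus ?thesis by (simp add: num_lattice_paths_def)
qed

lemma num_paths_zero2: "snd p < snd q \<Longrightarrow> num_lattice_paths p q = 0"
proof -
  assume a: "snd p < snd q"
  have "{ss. path_end p ss = q} = {}"
    using a by (auto simp: path_end_eq)
  thus ?thesis by (simp add: num_lattice_paths_def)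
qed



definition matg :: "('a \<Rightarrow> 'b \<Rightarrow> int) \<Rightarrow> (nat \<Rightarrow> 'a) \<Rightarrow> (nat \<Rightarrow> 'b) \<Rightarrow> nat \<Rightarrow> nat \<Rightarrow> int mat" where
  "matg f r c n m = mat n m (\<lambda>(i,j). f (r i) (c j))"

definition app :: "(nat \<Rightarrow> 'a) \<Rightarrow> nat \<Rightarrow> (nat \<Rightarrow> 'a) \<Rightarrow> nat \<Rightarrow> 'a" where
  "app r1 n1 r2 = (\<lambda>i. if i < n1 then r1 i else r2 (i - n1))"

lemma matg_carrier[simp]: "matg f r c n m \<in> carrier_mat n m"
  and matg_dim[simp]: "dim_row (matg f r c n m) = n" "dim_col (matg f r c n m) = m"
  and matg_index[simp]: "i < n \<Longrightarrow> j < m \<Longrightarrow> matg f r c n m $$ (i,j) = f (r i) (c j)"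
  by (auto simp: matg_def)

lemma matg_block: "matg f (app r1 n1 r2) (app c1 m1 c2) (n1+n2) (m1+m2) =
  four_block_mat (matg f r1 c1 n1 m1) (matg f r1 c2 n1 m2) (matg f r2 c1 n2 m1) (matg f r2 c2 n2 m2)"
  by (rule eq_matI) (auto simp: app_def)

lemma bij_shift: "bij_betw (\<lambda>i. i - n1) {n1..<n1+n2} {0..<(n2::nat)}"
  by (rule bij_betw_byWitness[where f'="\<lambda>i. i + n1"]) auto

lemma bij_app:
  assumes "bij_betw r1 {0..<n1} R1" "bij_betw r2 {0..<n2} R2" "R1 \<inter> R2 = {}"
  shows "bij_betw (app r1 n1 r2) {0..<n1+n2} (R1 \<union> R2)"
proof -
  have 1: "bij_betw (app r1 n1 r2) {0..<n1} R1"
    using assms(1) by (rule bij_betw_cong[THEN iffD1, rotated]) (auto simp: app_def)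
  have "bij_betw (r2 \<circ> (\<lambda>i. i - n1)) {n1..<n1+n2} R2"
    using bij_shift assms(2) by (rule bij_betw_trans)
  hence 2: "bij_betw (app r1 n1 r2) {n1..<n1+n2} R2"
    by (rule bij_betw_cong[THEN iffD1, rotated]) (auto simp: app_def)
  have "{0..<n1+n2} = {0..<n1} \<union> {n1..<n1+n2}" by auto
  thus ?thesis using bij_betw_combine[OF 1 2 assms(3)] by simp
qed

lemma matg_mult:
  assumes "bij_betw s {0..<k} S"
  shows "matg f r s n k * matg g s c k m = matg (\<lambda>u v. \<Sum>w\<in>S. f u w * g w v) r c n m"
proof (rule eq_matI)
  fix i j assume ij: "i < dim_row (matg (\<lambda>u v. \<Sum>w\<in>S. f u w * g w v) r c n m)"
    "j < dim_col (matg (\<lambda>u v. \<Sum>w\<in>S. f u w * g w v) r c n m)"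
  have "(matg f r s n k * matg g s c k m) $$ (i,j) = (\<Sum>l\<in>{0..<k}. f (r i) (s l) * g (s l) (c j))"
    using ij by (auto simp: scalar_prod_def intro!: sum.cong)
  also have "\<dots> = (\<Sum>w\<in>S. f (r i) w * g w (c j))"
    using sum.reindex_bij_betw[OF assms, of "\<lambda>w. f (r i) w * g w (c j)"] by simp
  finally show "(matg f r s n k * matg g s c k m) $$ (i,j) = matg (\<lambda>u v. \<Sum>w\<in>S. f u w * g w v) r c n m $$ (i,j)"
    using ij by simp
qed auto

lemma matg_add: "matg f r c n m + matg g r c n m = matg (\<lambda>u v. f u v + g u v) r c n m"
  by (rule eq_matI) auto

lemma det_reindex_rows:
  assumes r: "bij_betw r {0..<n} R" and r': "bij_betw r' {0..<n} R"
  shows "\<bar>det (matg f r c n n)\<bar> = \<bar>det (matg f r' c n n)\<bar>"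
proof -
  define p where "p = (\<lambda>i. if i < n then inv_into {0..<n} r (r' i) else i)"
  have "bij_betw (inv_into {0..<n} r \<circ> r') {0..<n} {0..<n}"
    using bij_betw_trans[OF r' bij_betw_inv_into[OF r]] .
  hence "bij_betw p {0..<n} {0..<n}"
    by (rule bij_betw_cong[THEN iffD1, rotated]) (auto simp: p_def)
  hence pp: "p permutes {0..<n}"
    by (rule bij_imp_permutes) (auto simp: p_def)
  have rp: "i < n \<Longrightarrow> r (p i) = r' i \<and> p i < n" for i
  proof -
    assume i: "i < n"
    have ri: "r' i \<in> r ` {0..<n}" using i r r' by (auto simp: bij_betw_def)
    have m1: "inv_into {0..<n} r (r' i) \<in> {0..<n}" by (rule inv_into_into[OF ri])
    have m2: "r (inv_into {0..<n} r (r' i)) = r' i" by (rule f_inv_into_f[OF ri])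
    show ?thesis using i m1 m2 unfolding p_def by simp
  qed
  have "matg f r' c n n = mat n n (\<lambda>(i,j). matg f r c n n $$ (p i, j))"
    by (rule eq_matI) (auto simp: rp)
  hence "det (matg f r' c n n) = signof p * det (matg f r c n n)"
    using det_permute_rows[OF matg_carrier pp] by simp
  thus ?thesis by (simp add: abs_mult)
qed

lemma transpose_matg: "transpose_mat (matg f r c n m) = matg (\<lambda>a b. f b a) c r m n"
  by (rule eq_matI) auto

lemma det_matg_transpose: "det (matg f r c n n) = det (matg (\<lambda>a b. f b a) c r n n)"
  using det_transpose[OF matg_carrier, of f r c n] transpose_matg by metis

lemma det_reindex:
  assumes "bij_betw r {0..<n} R" "bij_betw r' {0..<n} R"
    "bij_betw c {0..<n} C" "bij_betw c' {0..<n} C"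
  shows "\<bar>det (matg f r c n n)\<bar> = \<bar>det (matg f r' c' n n)\<bar>"
proof -
  have "\<bar>det (matg f r c n n)\<bar> = \<bar>det (matg f r' c n n)\<bar>" by (rule det_reindex_rows[OF assms(1,2)])
  also have "\<dots> = \<bar>det (matg (\<lambda>a b. f b a) c r' n n)\<bar>" by (subst det_matg_transpose[of f r' c n]) (rule refl)
  also have "\<dots> = \<bar>det (matg (\<lambda>a b. f b a) c' r' n n)\<bar>" by (rule det_reindex_rows[OF assms(3,4)])
  also have "\<dots> = \<bar>det (matg f r' c' n n)\<bar>" by (subst det_matg_transpose[of "\<lambda>a b. f b a" c' r' n]) (rule refl)
  finally show ?thesis .
qed

lemma matg_delta:
  assumes "inj_on r {0..<n}"
  shows "matg (\<lambda>u v. if u = v then 1 else 0) r r n n = 1\<^sub>m n"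
  by (rule eq_matI) (use assms in \<open>auto simp: inj_on_def\<close>)

lemma jacobi:
  fixes f g :: "'a \<Rightarrow> 'a \<Rightarrow> int"
  assumes S: "finite S" and AS: "A \<subseteq> S" and ES: "E \<subseteq> S" and card: "card A = card E"
    and eA: "bij_betw eA {0..<card A} A" and eE: "bij_betw eE {0..<card A} E"
    and eAc: "bij_betw eAc {0..<card S - card A} (S - A)"
    and eEc: "bij_betw eEc {0..<card S - card A} (S - E)"
    and inv: "\<And>u v. u \<in> S \<Longrightarrow> v \<in> S \<Longrightarrow> (\<Sum>w\<in>S. f u w * g w v) = (if u = v then 1 else 0)"
  shows "\<bar>det (matg g eA eE (card A) (card A))\<bar> =
         \<bar>det (matg f eEc eAc (card S - card A) (card S - card A))\<bar>"
proof -
  define a where "a = card A"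
  define b where "b = card S - card A"
  have cS: "card S = a + b" using card_mono[OF S AS] unfolding a_def b_def by simp
  define R where "R = app eE a eEc"
  define C where "C = app eA a eAc"
  have Rb: "bij_betw R {0..<a+b} S"
    using bij_app[OF eE[folded a_def] eEc[folded b_def a_def]] ES unfolding R_def by (simp add: Un_absorb1)
  have Cb: "bij_betw C {0..<a+b} S"
    using bij_app[OF eA[folded a_def] eAc[folded b_def a_def]] AS unfolding C_def by (simp add: Un_absorb1)
  define Mf where "Mf = matg f R C (a+b) (a+b)"
  define Pf where "Pf = matg g C R (a+b) (a+b)"
  have "Mf * Pf = matg (\<lambda>u v. \<Sum>w\<in>S. f u w * g w v) R R (a+b) (a+b)"
    unfolding Mf_def Pf_def by (rule matg_mult[OF Cb])
  also have "\<dots> = matg (\<lambda>u v. if u = v then 1 else 0) R R (a+b) (a+b)"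
    by (rule eq_matI) (use Rb inv in \<open>auto simp: bij_betw_def\<close>)
  also have "\<dots> = 1\<^sub>m (a+b)" by (rule matg_delta) (use Rb in \<open>simp add: bij_betw_def\<close>)
  finally have "det Mf * det Pf = 1"
    using det_mult[of Mf "a+b" Pf] unfolding Mf_def Pf_def by simp
  hence dM: "\<bar>det Mf\<bar> = 1" by (metis abs_zmult_eq_1 abs_one)
  define M11 where "M11 = matg f eE eA a a"
  define M12 where "M12 = matg f eE eAc a b"
  define M21 where "M21 = matg f eEc eA b a"
  define M22 where "M22 = matg f eEc eAc b b"
  define P11 where "P11 = matg g eA eE a a"
  define P21 where "P21 = matg g eAc eE b a"
  have Mb: "Mf = four_block_mat M11 M12 M21 M22"
    unfolding Mf_def R_def C_def M11_def M12_def M21_def M22_def by (rule matg_block)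
  define Y where "Y = four_block_mat P11 (0\<^sub>m a b) P21 (1\<^sub>m b)"
  have sumsplit: "u \<in> S \<Longrightarrow> v \<in> S \<Longrightarrow> (\<Sum>w\<in>A. f u w * g w v) + (\<Sum>w\<in>S - A. f u w * g w v) = (if u = v then 1 else 0)" for u v
    using sum.subset_diff[OF AS S, of "\<lambda>w. f u w * g w v"] inv by simp
  have eAb: "bij_betw eA {0..<a} A" using eA a_def by simp
  have eAcb: "bij_betw eAc {0..<b} (S - A)" using eAc b_def by simp
  have eEin: "i < a \<Longrightarrow> eE i \<in> E" for i using eE unfolding a_def bij_betw_def by auto
  have eEcin: "i < b \<Longrightarrow> eEc i \<in> S - E" for i using eEc unfolding b_def bij_betw_def by auto
  have eEinj: "i < a \<Longrightarrow> j < a \<Longrightarrow> eE i = eE j \<Longrightarrow> i = j" for i j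
    using eE unfolding a_def bij_betw_def inj_on_def by auto
  have b1: "M11 * P11 + M12 * P21 = 1\<^sub>m a"
    unfolding M11_def P11_def M12_def P21_def matg_mult[OF eAb] matg_mult[OF eAcb] matg_add
  proof (rule eq_matI)
    fix i j assume "i < dim_row (1\<^sub>m a)" "j < dim_col (1\<^sub>m a)"
    hence ij: "i < a" "j < a" by auto
    hence "eE i \<in> S" "eE j \<in> S" using eEin ES by auto
    thus "matg (\<lambda>u v. (\<Sum>w\<in>A. f u w * g w v) + (\<Sum>w\<in>S - A. f u w * g w v)) eE eE a a $$ (i, j) = 1\<^sub>m a $$ (i, j)"
      using ij sumsplit eEinj by auto
  qed auto
  have b2: "M21 * P11 + M22 * P21 = 0\<^sub>m b a"
    unfolding M21_def P11_def M22_def P21_def matg_mult[OF eAb] matg_mult[OF eAcb] matg_add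
  proof (rule eq_matI)
    fix i j assume "i < dim_row (0\<^sub>m b a)" "j < dim_col (0\<^sub>m b a)"
    hence ij: "i < b" "j < a" by auto
    hence "eEc i \<in> S" "eE j \<in> S" "eEc i \<noteq> eE j" using eEin[of j] eEcin[of i] ES by auto
    thus "matg (\<lambda>u v. (\<Sum>w\<in>A. f u w * g w v) + (\<Sum>w\<in>S - A. f u w * g w v)) eEc eE b a $$ (i, j) = 0\<^sub>m b a $$ (i, j)"
      using ij sumsplit by auto
  qed auto
  have "Mf * Y = four_block_mat (M11 * P11 + M12 * P21) (M11 * 0\<^sub>m a b + M12 * 1\<^sub>m b)
      (M21 * P11 + M22 * P21) (M21 * 0\<^sub>m a b + M22 * 1\<^sub>m b)"
    unfolding Mb Y_def
    by (rule mult_four_block_mat) (auto simp: M11_def M12_def M21_def M22_def P11_def P21_def)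
  also have "\<dots> = four_block_mat (1\<^sub>m a) M12 (0\<^sub>m b a) M22"
    unfolding b1 b2 by (simp add: M11_def M12_def M21_def M22_def)
  finally have MY: "Mf * Y = four_block_mat (1\<^sub>m a) M12 (0\<^sub>m b a) M22" .
  have "det (Mf * Y) = det M22"
    unfolding MY by (subst det_four_block_mat_lower_left_zero[of _ a _ b]) (auto simp: M12_def M22_def)
  moreover have "det Y = det P11"
    unfolding Y_def by (subst det_four_block_mat_upper_right_zero[of _ a _ b]) (auto simp: P11_def P21_def)
  moreover have "det (Mf * Y) = det Mf * det Y"
    by (rule det_mult[of _ "a+b"]) (auto simp: Mf_def Y_def P11_def)
  ultimately have "det M22 = det Mf * det P11" by simp
  hence "\<bar>det M22\<bar> = \<bar>det P11\<bar>" using dM by (simp add: abs_mult)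
  thus ?thesis unfolding M22_def P11_def a_def b_def by simp
qed

lemma det_scale:
  assumes A: "A \<in> carrier_mat n n"
  shows "det (mat n n (\<lambda>(i,j). s i * t j * A $$ (i,j))) = (\<Prod>i<n. s i) * (\<Prod>j<n. t j) * det A"
proof -
  have "det (mat n n (\<lambda>(i,j). s i * t j * A $$ (i,j))) =
    (\<Sum>p\<in>{p. p permutes {0..<n}}. signof p * (\<Prod>i = 0..<n. s i * t (p i) * A $$ (i, p i)))"
    by (subst det_def'[of _ n]) (auto intro!: sum.cong prod.cong)
  also have "\<dots> = (\<Sum>p\<in>{p. p permutes {0..<n}}. (\<Prod>i<n. s i) * (\<Prod>j<n. t j) * (signof p * (\<Prod>i = 0..<n. A $$ (i, p i))))"
  proof (rule sum.cong)
    fix p assume "p \<in> {p. p permutes {0..<n}}"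
    hence pp: "p permutes {0..<n}" by simp
    have "(\<Prod>i = 0..<n. t (p i)) = (\<Prod>j = 0..<n. t j)"
      using prod.permute[OF pp, of t] by (simp add: comp_def)
    thus "signof p * (\<Prod>i = 0..<n. s i * t (p i) * A $$ (i, p i)) =
      (\<Prod>i<n. s i) * (\<Prod>j<n. t j) * (signof p * (\<Prod>i = 0..<n. A $$ (i, p i)))"
      by (simp add: prod.distrib atLeast0LessThan)
  qed simp
  also have "\<dots> = (\<Prod>i<n. s i) * (\<Prod>j<n. t j) * det A"
    by (simp add: det_def'[OF A] sum_distrib_left)
  finally show ?thesis .
qed



definition srel :: "'a set \<Rightarrow> 'a set \<Rightarrow> ('a \<Rightarrow> 'a) \<Rightarrow> ('a \<times> 'a) set" where
  "srel S C h = {(x, h x) | x. x \<in> S - C \<and> h x \<noteq> x}"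

lemma srel_no_C: "(y, z) \<in> srel S C h \<Longrightarrow> y \<notin> C"
  by (auto simp: srel_def)

lemma srel_from_C: "(y, b) \<in> (srel S C h)\<^sup>* \<Longrightarrow> y \<in> C \<Longrightarrow> b = y"
  by (erule converse_rtranclE) (auto simp: srel_def)

lemma splice:
  fixes h g :: "'a \<Rightarrow> 'a" and \<rho> :: "'a \<Rightarrow> nat"
  assumes S: "finite S" and C: "C \<subseteq> S" and g: "g permutes C"
  shows "h permutes S \<Longrightarrow> (\<forall>x \<in> S - C. h x \<noteq> x \<longrightarrow> \<rho> x < \<rho> (h x))
    \<Longrightarrow> (\<forall>c\<in>C. (h c, g c) \<in> (srel S C h)\<^sup>*)
    \<Longrightarrow> sign h = (-1) ^ (card {x \<in> S - C. h x \<noteq> x}) * sign g"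
proof (induction "card {x \<in> S - C. h x \<noteq> x}" arbitrary: h)
  case 0
  have X: "{x \<in> S - C. h x \<noteq> x} = {}" using 0 S by simp
  hence "srel S C h = {}" by (auto simp: srel_def)
  hence "\<And>c. c \<in> C \<Longrightarrow> g c = h c" using 0 by simp
  moreover have "\<And>y. y \<notin> C \<Longrightarrow> g y = y" using g permutes_not_in by metis
  moreover have "\<And>y. y \<notin> S \<Longrightarrow> h y = y" using 0 permutes_not_in by metis
  ultimately have "h = g"
  proof -
    assume a1: "\<And>c. c \<in> C \<Longrightarrow> g c = h c" and a2: "\<And>y. y \<notin> C \<Longrightarrow> g y = y"
      and a3: "\<And>y. y \<notin> S \<Longrightarrow> h y = y"
    show "h = g"
    proof
      fix y show "h y = g y"
      proof (cases "y \<in> C")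
        case True thus ?thesis using a1 by simp
      next
        case False
        hence "h y = y" using a3 X by (cases "y \<in> S") auto
        thus ?thesis using a2 False by simp
      qed
    qed
  qed
  thus ?case using 0 by simp
next
  case (Suc n)
  define X where "X = {x \<in> S - C. h x \<noteq> x}"
  have fX: "finite X" using S by (simp add: X_def)
  have "X \<noteq> {}"
  proof
    assume "X = {}"
    hence "card {x \<in> S - C. h x \<noteq> x} = 0" unfolding X_def by (simp only: card.empty)
    thus False using Suc(2) by simp
  qed
  define mx where "mx = Max (\<rho> ` X)"
  have "mx \<in> \<rho> ` X" unfolding mx_def using fX \<open>X \<noteq> {}\<close> by (intro Max_in) auto
  then obtain x where x: "x \<in> X" "\<rho> x = mx" by blast
  have xmax: "\<And>y. y \<in> X \<Longrightarrow> \<rho> y \<le> \<rho> x" using x fX mx_def by simp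
  have hp: "h permutes S" by fact
  have xS: "x \<in> S" "x \<notin> C" "h x \<noteq> x" using x X_def by auto
  have hxS: "h x \<in> S" using hp xS permutes_in_image by metis
  have hxC: "h x \<in> C"
  proof (rule ccontr)
    assume "h x \<notin> C"
    moreover have "h (h x) \<noteq> h x" using xS hp by (metis permutes_inj inj_eq)
    ultimately have "h x \<in> X" using hxS X_def by auto
    hence "\<rho> (h x) \<le> \<rho> x" using xmax by blast
    moreover have "\<rho> x < \<rho> (h x)" using Suc(4) xS by auto
    ultimately show False by simp
  qed
  define w where "w = Hilbert_Choice.inv h x"
  have hw: "h w = x" using hp w_def by (simp add: permutes_inverses(1))
  have wS: "w \<in> S" using hp xS w_def by (metis permutes_inv permutes_in_image)
  have wx: "w \<noteq> x" using hw xS by auto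
  define h' where "h' = h \<circ> Transposition.transpose w x"
  have h'p: "h' permutes S" unfolding h'_def
    by (rule permutes_compose[OF permutes_swap_id[OF wS xS(1)] hp])
  have hh': "h = h' \<circ> Transposition.transpose w x"
    unfolding h'_def by (rule ext) (simp add: Transposition.transpose_def)
  have h'w: "h' w = h x" and h'x: "h' x = x" and h'o: "\<And>y. y \<noteq> w \<Longrightarrow> y \<noteq> x \<Longrightarrow> h' y = h y"
    unfolding h'_def using hw by (auto simp: Transposition.transpose_def)
  have perm: "permutation h'" using h'p S permutation_permutes by blast
  have sgn: "sign h = - sign h'"
    unfolding hh' by (subst sign_compose[OF perm]) (auto simp: sign_swap_id wx permutation_swap_id)
  have hwx: "h w \<noteq> w" using hw wx by simp
  have X': "{y \<in> S - C. h' y \<noteq> y} = X - {x}"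
  proof -
    have "y \<in> S - C \<Longrightarrow> (h' y \<noteq> y) = (h y \<noteq> y \<and> y \<noteq> x)" for y
    proof -
      assume y: "y \<in> S - C"
      show ?thesis
      proof (cases "y = w")
        case True
        thus ?thesis using h'w hxC y hwx wx by auto
      next
        case False
        thus ?thesis using h'o h'x by (cases "y = x") auto
      qed
    qed
    thus ?thesis unfolding X_def by auto
  qed
  have cX': "n = card {y \<in> S - C. h' y \<noteq> y}"
    unfolding X' using Suc(2) x fX X_def by simp
  have rk': "\<forall>y \<in> S - C. h' y \<noteq> y \<longrightarrow> \<rho> y < \<rho> (h' y)"
  proof (intro ballI impI)
    fix y assume y: "y \<in> S - C" "h' y \<noteq> y"
    show "\<rho> y < \<rho> (h' y)"
    proof (cases "y = w")
      case True
      have "\<rho> w < \<rho> x" using Suc(4) y True hw hwx by force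
      moreover have "\<rho> x < \<rho> (h x)" using Suc(4) xS by auto
      ultimately show ?thesis using True h'w by simp
    next
      case False
      hence "y \<noteq> x" using y h'x by auto
      thus ?thesis using Suc(4) y False h'o by auto
    qed
  qed
  have xb: "(x, b) \<in> (srel S C h)\<^sup>* \<Longrightarrow> b \<in> C \<Longrightarrow> b = h x" for b
  proof -
    assume a: "(x, b) \<in> (srel S C h)\<^sup>*" "b \<in> C"
    have "x \<noteq> b" using a xS by auto
    then obtain y where "(x, y) \<in> srel S C h" "(y, b) \<in> (srel S C h)\<^sup>*"
      using a by (metis converse_rtranclE)
    hence "y = h x" "(y, b) \<in> (srel S C h)\<^sup>*" by (auto simp: srel_def)
    thus "b = h x" using srel_from_C hxC by metis
  qed
  have helper: "(a, b) \<in> (srel S C h)\<^sup>* \<Longrightarrow> b \<in> C \<Longrightarrow> a \<noteq> x \<Longrightarrow> (a, b) \<in> (srel S C h')\<^sup>*" for a b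
  proof (induction rule: converse_rtrancl_induct)
    case base
    then show ?case by simp
  next
    case (step a a1)
    have a: "a \<in> S - C" "a1 = h a" "h a \<noteq> a" using step(1) by (auto simp: srel_def)
    show ?case
    proof (cases "a1 = x")
      case False
      hence "a \<noteq> w" using a hw by auto
      hence "h' a = h a" using h'o step(5) by auto
      hence "(a, a1) \<in> srel S C h'" using a by (auto simp: srel_def)
      thus ?thesis using step(3,4) False by (meson converse_rtrancl_into_rtrancl)
    next
      case True
      hence "a = w" using a hw hp by (metis permutes_inj inj_eq)
      have "b = h x" using xb step(2,4) True by blast
      moreover have "(w, h x) \<in> srel S C h'" using a \<open>a = w\<close> h'w hxC by (auto simp: srel_def)
      ultimately show ?thesis using \<open>a = w\<close> by simp
    qed
  qed
  have ret': "\<forall>c\<in>C. (h' c, g c) \<in> (srel S C h')\<^sup>*"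
  proof
    fix c assume c: "c \<in> C"
    have gc: "g c \<in> C" using g c permutes_in_image by metis
    have r: "(h c, g c) \<in> (srel S C h)\<^sup>*" using Suc(5) c by auto
    show "(h' c, g c) \<in> (srel S C h')\<^sup>*"
    proof (cases "h c = x")
      case True
      hence "c = w" using hw hp by (metis permutes_inj inj_eq)
      have "g c = h x" using xb r True gc by auto
      thus ?thesis using \<open>c = w\<close> h'w by simp
    next
      case False
      hence "c \<noteq> w" using hw by auto
      moreover have "c \<noteq> x" using c xS by auto
      ultimately have "h' c = h c" using h'o by auto
      thus ?thesis using helper[OF r gc False] by simp
    qed
  qed
  have "sign h' = (-1) ^ n * sign g"
    using Suc(1)[OF cX' h'p rk' ret'] cX' by simp
  moreover have "card {x \<in> S - C. h x \<noteq> x} = Suc n" using Suc(2) by simp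
  ultimately show ?case using sgn by simp
qed



lemma up_labels_T: "up_labels (T_region d I) = {u. mdeg u + 1 = d \<and> u \<notin> I}"
  by (auto simp: up_labels_def T_region_def tri_region_def)

lemma down_labels_T: "down_labels (T_region d I) = {m. mdeg m + 2 = d \<and> m \<notin> I}"
  by (auto simp: down_labels_def T_region_def tri_region_def)

lemma finite_deg: "finite {u::mono. mdeg u + k = d}"
proof (rule finite_subset)
  show "{u::mono. mdeg u + k = d} \<subseteq> {0..d} \<times> {0..d} \<times> {0..d}" by auto
qed auto

lemma finite_up: "finite (up_labels (T_region d I))"
  unfolding up_labels_T by (rule finite_subset[OF _ finite_deg[of 1 d]]) auto

lemma finite_down: "finite (down_labels (T_region d I))"
  unfolding down_labels_T by (rule finite_subset[OF _ finite_deg[of 2 d]]) auto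

lemma on_down_iff: "on_down T u \<longleftrightarrow> u \<in> times_z ` down_labels T"
  unfolding on_down_def down_labels_def image_def by blast

lemma A_verts_eq: "A_verts T = up_labels T - times_z ` down_labels T"
  unfolding A_verts_def on_down_iff by (auto simp: on_up_def up_labels_def)

lemma E_verts_eq: "E_verts T = times_z ` down_labels T - up_labels T"
  unfolding E_verts_def on_down_iff by (auto simp: on_up_def up_labels_def)

lemma inj_times_z: "inj times_z"
proof (rule injI)
  fix x y :: mono assume "times_z x = times_z y" thus "x = y" by (cases x; cases y) auto
qed

lemma mdeg_z[simp]: "mdeg (times_z m) = Suc (mdeg m)" by (cases m) auto
lemma mdeg_x[simp]: "mdeg (times_x m) = Suc (mdeg m)" by (cases m) auto
lemma mdeg_y[simp]: "mdeg (times_y m) = Suc (mdeg m)" by (cases m) auto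

definition Mf :: "mono \<Rightarrow> mono \<Rightarrow> int" where
  "Mf u w = (if u = w then 1 else 0) - (if (\<exists>m. w = times_z m \<and> (u = times_x m \<or> u = times_y m)) then 1 else 0)"

definition Pf :: "mono \<Rightarrow> mono \<Rightarrow> int" where
  "Pf u v = int (num_lattice_paths (lat_coord u) (lat_coord v))"

lemma adj_iff:
  "(\<exists>m. w = times_z m \<and> (u = times_x m \<or> u = times_y m)) \<longleftrightarrow>
   ((fst u > 0 \<and> w = (fst u - 1, fst (snd u), snd (snd u) + 1)) \<or>
    (fst (snd u) > 0 \<and> w = (fst u, fst (snd u) - 1, snd (snd u) + 1)))"
proof -
  obtain a b c where u: "u = (a,b,c)" by (cases u)
  show ?thesis
  proof
    assume "\<exists>m. w = times_z m \<and> (u = times_x m \<or> u = times_y m)"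
    then obtain m where m: "w = times_z m" "u = times_x m \<or> u = times_y m" by blast
    obtain a' b' c' where m': "m = (a',b',c')" by (cases m)
    show "(fst u > 0 \<and> w = (fst u - 1, fst (snd u), snd (snd u) + 1)) \<or>
      (fst (snd u) > 0 \<and> w = (fst u, fst (snd u) - 1, snd (snd u) + 1))"
      using m m' u by auto
  next
    assume "(fst u > 0 \<and> w = (fst u - 1, fst (snd u), snd (snd u) + 1)) \<or>
      (fst (snd u) > 0 \<and> w = (fst u, fst (snd u) - 1, snd (snd u) + 1))"
    thus "\<exists>m. w = times_z m \<and> (u = times_x m \<or> u = times_y m)"
    proof
      assume h: "fst u > 0 \<and> w = (fst u - 1, fst (snd u), snd (snd u) + 1)"
      show ?thesis by (rule exI[of _ "(a - 1, b, c)"]) (use h u in auto)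
    next
      assume h: "fst (snd u) > 0 \<and> w = (fst u, fst (snd u) - 1, snd (snd u) + 1)"
      show ?thesis by (rule exI[of _ "(a, b - 1, c)"]) (use h u in auto)
    qed
  qed
qed

lemma MP_inv:
  assumes u: "mdeg u + 1 = d" and v: "mdeg v + 1 = d"
  shows "(\<Sum>w\<in>{w. mdeg w + 1 = d}. Mf u w * Pf w v) = (if u = v then 1 else 0)"
proof -
  obtain a b c where u': "u = (a,b,c)" by (cases u)
  obtain a' b' c' where v': "v = (a',b',c')" by (cases v)
  define VF where "VF = {w::mono. mdeg w + 1 = d}"
  have fin: "finite VF" unfolding VF_def by (rule finite_deg)
  define w1 where "w1 = (a - 1, b, c + 1)"
  define w2 where "w2 = (a, b - 1, c + 1)"
  have adj: "(\<exists>m. w = times_z m \<and> (u = times_x m \<or> u = times_y m)) \<longleftrightarrow> ((a > 0 \<and> w = w1) \<or> (b > 0 \<and> w = w2))" for w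
    unfolding adj_iff u' w1_def w2_def by simp
  have w12: "w1 \<noteq> w2 \<or> \<not> (a > 0 \<and> b > 0)" unfolding w1_def w2_def by auto
  have pt: "Mf u w * Pf w v = (if u = w then Pf w v else 0) - ((if a > 0 \<and> w = w1 then Pf w v else 0) + (if b > 0 \<and> w = w2 then Pf w v else 0))" for w
    unfolding Mf_def adj using w12 by (auto simp: algebra_simps)
  have w1V: "a > 0 \<Longrightarrow> w1 \<in> VF" using u u' unfolding VF_def w1_def by auto
  have w2V: "b > 0 \<Longrightarrow> w2 \<in> VF" using u u' unfolding VF_def w2_def by auto
  have s1: "(\<Sum>w\<in>VF. if a > 0 \<and> w = w1 then Pf w v else 0) = (if a > 0 then Pf w1 v else 0)"
    using w1V fin by (cases "a > 0") (auto simp: sum.delta')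
  have s2: "(\<Sum>w\<in>VF. if b > 0 \<and> w = w2 then Pf w v else 0) = (if b > 0 then Pf w2 v else 0)"
    using w2V fin by (cases "b > 0") (auto simp: sum.delta')
  have s0: "(\<Sum>w\<in>VF. if u = w then Pf w v else 0) = Pf u v"
    using fin u unfolding VF_def by (simp add: sum.delta)
  have "(\<Sum>w\<in>VF. Mf u w * Pf w v) = Pf u v - ((if a > 0 then Pf w1 v else 0) + (if b > 0 then Pf w2 v else 0))"
    unfolding pt sum_subtractf sum.distrib s0 s1 s2 by simp
  also have "\<dots> = (if u = v then 1 else 0)"
  proof -
    have rec: "Pf u v = (if lat_coord u = lat_coord v then 1 else 0) + int (num_lattice_paths (int c + 1, int a) (lat_coord v))
        + int (num_lattice_paths (int c + 1, int a - 1) (lat_coord v))"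
      unfolding Pf_def using num_paths_rec[of "lat_coord u" "lat_coord v"] u' by simp
    have e1: "a > 0 \<Longrightarrow> Pf w1 v = int (num_lattice_paths (int c + 1, int a - 1) (lat_coord v))"
      unfolding Pf_def w1_def by (simp add: of_nat_diff add.commute)
    have e2: "b > 0 \<Longrightarrow> Pf w2 v = int (num_lattice_paths (int c + 1, int a) (lat_coord v))"
      unfolding Pf_def w2_def by (simp add: add.commute)
    have z1: "a = 0 \<Longrightarrow> num_lattice_paths (int c + 1, int a - 1) (lat_coord v) = 0"
      using v' by (intro num_paths_zero2) simp
    have z2: "b = 0 \<Longrightarrow> num_lattice_paths (int c + 1, int a) (lat_coord v) = 0"
      using v' u v u' by (intro num_paths_zero1) simp
    have ceq: "(lat_coord u = lat_coord v) = (u = v)"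
      using u v u' v' by auto
    have q1: "(if 0 < a then Pf w1 v else 0) = int (num_lattice_paths (int c + 1, int a - 1) (lat_coord v))"
      using e1 z1 by (cases "a > 0") auto
    have q2: "(if 0 < b then Pf w2 v else 0) = int (num_lattice_paths (int c + 1, int a) (lat_coord v))"
      using e2 z2 by (cases "b > 0") auto
    show ?thesis unfolding q1 q2 rec ceq by simp
  qed
  finally show ?thesis unfolding VF_def .
qed



lemma neg1_sq: "(-1::int)^c * (-1)^c = 1" by (induct c) auto

lemma shares_iff: "shares_edge (Down m) (Up u) \<longleftrightarrow> (u = times_x m \<or> u = times_y m \<or> u = times_z m)"
  by (auto simp: shares_edge_def)

lemma sgnlem: "Mf u (times_z m) = - ((-1)^(snd (snd u))) * (-1)^(snd (snd m)) * (if shares_edge (Down m) (Up u) then 1 else 0)"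
proof -
  have ad: "(\<exists>m'. times_z m = times_z m' \<and> (u = times_x m' \<or> u = times_y m')) \<longleftrightarrow> (u = times_x m \<or> u = times_y m)"
    using inj_times_z by (auto simp: inj_eq)
  obtain a b c where m: "m = (a,b,c)" by (cases m)
  have "u = times_x m \<or> u = times_y m \<or> u = times_z m \<or> (u \<noteq> times_x m \<and> u \<noteq> times_y m \<and> u \<noteq> times_z m)" by blast
  moreover have "u = times_x m \<Longrightarrow> ?thesis" unfolding Mf_def ad shares_iff using m neg1_sq[of c] by auto
  moreover have "u = times_y m \<Longrightarrow> ?thesis" unfolding Mf_def ad shares_iff using m neg1_sq[of c] by auto
  moreover have "u = times_z m \<Longrightarrow> ?thesis" unfolding Mf_def ad shares_iff using m neg1_sq[of c] by auto
  moreover have "u \<noteq> times_x m \<and> u \<noteq> times_y m \<and> u \<noteq> times_z m \<Longrightarrow> ?thesis" unfolding Mf_def ad shares_iff by auto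
  ultimately show ?thesis by blast
qed

lemma Mf_UQ:
  assumes mi: "monomial_ideal I" and u: "u \<in> up_labels (T_region d I)"
    and w: "w \<notin> up_labels (T_region d I)" "w \<notin> times_z ` down_labels (T_region d I)"
  shows "Mf u w = 0"
proof -
  have uw: "u \<noteq> w" using u w by auto
  have "\<not> (\<exists>m. w = times_z m \<and> (u = times_x m \<or> u = times_y m))"
  proof
    assume "\<exists>m. w = times_z m \<and> (u = times_x m \<or> u = times_y m)"
    then obtain m where m: "w = times_z m" "u = times_x m \<or> u = times_y m" by blast
    have ud: "mdeg u + 1 = d" "u \<notin> I" using u by (auto simp: up_labels_T)
    have md: "mdeg m + 2 = d" using ud m by auto
    have "m \<notin> down_labels (T_region d I)" using w m by auto
    hence mI: "m \<in> I" using md by (auto simp: down_labels_T)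
    obtain a b c where mm: "m = (a,b,c)" by (cases m)
    have "u \<in> I" using mi mI m mm unfolding monomial_ideal_def by force
    thus False using ud by simp
  qed
  thus ?thesis using uw by (simp add: Mf_def)
qed

lemma Mf_tri:
  assumes "revlex_less q1 q2"
  shows "Mf q1 q2 = 0"
proof -
  have ne: "q1 \<noteq> q2" using assms revlex_irrefl by metis
  have "\<not> (\<exists>m. q2 = times_z m \<and> (q1 = times_x m \<or> q1 = times_y m))"
  proof
    assume "\<exists>m. q2 = times_z m \<and> (q1 = times_x m \<or> q1 = times_y m)"
    then obtain m where m: "q2 = times_z m" "q1 = times_x m \<or> q1 = times_y m" by blast
    obtain a b c where mm: "m = (a,b,c)" by (cases m)
    have "revlex_less q2 q1" using m mm by auto
    thus False using assms revlex_asym by blast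
  qed
  thus ?thesis using ne by (simp add: Mf_def)
qed

lemma Mf_diag: "Mf q q = 1"
proof -
  have "\<not> (\<exists>m. q = times_z m \<and> (q = times_x m \<or> q = times_y m))"
  proof
    assume "\<exists>m. q = times_z m \<and> (q = times_x m \<or> q = times_y m)"
    then obtain m where m: "q = times_z m" "q = times_x m \<or> q = times_y m" by blast
    obtain a b c where mm: "m = (a,b,c)" by (cases m)
    show False using m mm by auto
  qed
  thus ?thesis by (simp add: Mf_def)
qed

lemma part2:
  assumes mi: "monomial_ideal I" and bal: "balanced (T_region d I)"
  shows "\<bar>det (Z_mat (T_region d I))\<bar> = \<bar>det (N_mat (T_region d I))\<bar>"
proof -
  define T where "T = T_region d I"
  define U where "U = up_labels T"
  define D where "D = down_labels T"
  define VF where "VF = {u::mono. mdeg u + 1 = d}"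
  define Az where "Az = times_z ` D"
  define A where "A = A_verts T"
  define E where "E = E_verts T"
  define Q where "Q = VF - U - Az"
  have fU: "finite U" and fD: "finite D" using finite_up finite_down unfolding U_def D_def T_def by auto
  have fVF: "finite VF" unfolding VF_def by (rule finite_deg)
  have UVF: "U \<subseteq> VF" unfolding U_def T_def VF_def up_labels_T by auto
  have AzVF: "Az \<subseteq> VF" unfolding Az_def D_def T_def VF_def down_labels_T by auto
  have Aeq: "A = U - Az" unfolding A_def A_verts_eq U_def Az_def D_def ..
  have Eeq: "E = Az - U" unfolding E_def E_verts_eq U_def Az_def D_def ..
  have fAz: "finite Az" using fD Az_def by simp
  define n where "n = card U"
  have cD: "card D = n" using bal unfolding balanced_def n_def U_def D_def T_def by simp
  have cAz: "card Az = n" unfolding Az_def using cD card_image inj_times_z by (metis inj_on_subset subset_UNIV)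
  have cAE: "card A = card E"
    unfolding Aeq Eeq card_Diff_subset_Int[OF finite_Int[OF disjI1[OF fU]]] card_Diff_subset_Int[OF finite_Int[OF disjI1[OF fAz]]]
    using cAz n_def by (simp add: Int_commute)
  have AVF: "A \<subseteq> VF" and EVF: "E \<subseteq> VF" using Aeq Eeq UVF AzVF by auto
  have fA: "finite A" "finite E" using fVF AVF EVF finite_subset by auto
  define a where "a = card A"
  define b where "b = card VF - card A"
  have cVA: "card (VF - A) = b" unfolding b_def using card_Diff_subset[OF fA(1) AVF] .
  have cVE: "card (VF - E) = b" unfolding b_def using card_Diff_subset[OF fA(2) EVF] cAE by simp
  have J: "\<bar>det (matg Pf (rl_nth A) (rl_nth E) a a)\<bar> = \<bar>det (matg Mf (rl_nth (VF - E)) (rl_nth (VF - A)) b b)\<bar>"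
    unfolding a_def b_def
  proof (rule jacobi[OF fVF AVF EVF cAE])
    show "bij_betw (rl_nth A) {0..<card A} A" by (rule rl_nth_bij[OF fA(1)])
    show "bij_betw (rl_nth E) {0..<card A} E" using rl_nth_bij[OF fA(2)] cAE by simp
    show "bij_betw (rl_nth (VF - A)) {0..<card VF - card A} (VF - A)"
      using rl_nth_bij[of "VF - A"] fVF cVA b_def by simp
    show "bij_betw (rl_nth (VF - E)) {0..<card VF - card A} (VF - E)"
      using rl_nth_bij[of "VF - E"] fVF cVE b_def by simp
    show "\<And>u v. u \<in> VF \<Longrightarrow> v \<in> VF \<Longrightarrow> (\<Sum>w\<in>VF. Mf u w * Pf w v) = (if u = v then 1 else 0)"
      unfolding VF_def using MP_inv by blast
  qed
  have N: "N_mat T = matg Pf (rl_nth A) (rl_nth E) a a"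
    unfolding N_mat_def matg_def A_pt_def E_pt_def Pf_def a_def A_def E_def using cAE[unfolded A_def E_def]
    by simp
  have fQ: "finite Q" using fVF Q_def by simp
  define q where "q = card Q"
  have VE: "VF - E = U \<union> Q" unfolding Eeq Q_def using UVF AzVF by auto
  have VA: "VF - A = Az \<union> Q" unfolding Aeq Q_def using UVF AzVF by auto
  have dUQ: "U \<inter> Q = {}" and dAQ: "Az \<inter> Q = {}" unfolding Q_def by auto
  have bnq: "b = n + q" using cVE VE card_Un_disjoint[OF fU fQ dUQ] n_def q_def by simp
  define W where "W = rl_nth U"
  define B where "B = rl_nth D"
  define eQ where "eQ = rl_nth Q"
  have bW: "bij_betw W {0..<n} U" using rl_nth_bij[OF fU] n_def W_def by simp
  have bB: "bij_betw B {0..<n} D" using rl_nth_bij[OF fD] cD B_def by simp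
  have bQ: "bij_betw eQ {0..<q} Q" using rl_nth_bij[OF fQ] q_def eQ_def by simp
  have bz: "bij_betw times_z D Az" unfolding Az_def
    by (rule inj_on_imp_bij_betw) (use inj_times_z in \<open>auto intro: inj_on_subset\<close>)
  have bzB: "bij_betw (times_z \<circ> B) {0..<n} Az" using bij_betw_trans[OF bB bz] .
  define r' where "r' = app W n eQ"
  define c' where "c' = app (times_z \<circ> B) n eQ"
  have br': "bij_betw r' {0..<n+q} (VF - E)" unfolding r'_def VE by (rule bij_app[OF bW bQ dUQ])
  have bc': "bij_betw c' {0..<n+q} (VF - A)" unfolding c'_def VA by (rule bij_app[OF bzB bQ dAQ])
  have b1: "bij_betw (rl_nth (VF - E)) {0..<n+q} (VF - E)" using rl_nth_bij[of "VF - E"] fVF cVE bnq by simp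
  have b2: "bij_betw (rl_nth (VF - A)) {0..<n+q} (VF - A)" using rl_nth_bij[of "VF - A"] fVF cVA bnq by simp
  have R: "\<bar>det (matg Mf (rl_nth (VF - E)) (rl_nth (VF - A)) b b)\<bar> = \<bar>det (matg Mf r' c' (n+q) (n+q))\<bar>"
    unfolding bnq by (rule det_reindex[OF b1 br' b2 bc'])
  define X where "X = matg Mf W (times_z \<circ> B) n n"
  define MQQ where "MQQ = matg Mf eQ eQ q q"
  have UR: "matg Mf W eQ n q = 0\<^sub>m n q"
  proof (rule eq_matI)
    fix i j assume "i < dim_row (0\<^sub>m n q)" "j < dim_col (0\<^sub>m n q)"
    hence ij: "i < n" "j < q" by auto
    have "W i \<in> U" using bW ij by (auto simp: bij_betw_def)
    moreover have "eQ j \<in> Q" using bQ ij by (auto simp: bij_betw_def)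
    ultimately have "Mf (W i) (eQ j) = 0"
      using Mf_UQ[OF mi] unfolding Q_def U_def T_def Az_def D_def by auto
    thus "matg Mf W eQ n q $$ (i, j) = 0\<^sub>m n q $$ (i, j)" using ij by simp
  qed auto
  have blk: "matg Mf r' c' (n+q) (n+q) = four_block_mat X (0\<^sub>m n q) (matg Mf eQ (times_z \<circ> B) q n) MQQ"
    unfolding r'_def c'_def X_def MQQ_def matg_block UR ..
  have dQ: "det MQQ = 1"
  proof -
    have "det MQQ = prod_list (diag_mat MQQ)"
    proof (rule det_lower_triangular[of q])
      fix i j assume ij: "i < j" "j < q"
      have "revlex_less (eQ i) (eQ j)" unfolding eQ_def by (rule rl_nth_mono[OF fQ ij(1)]) (use ij q_def in simp)
      thus "MQQ $$ (i, j) = 0" using ij Mf_tri unfolding MQQ_def by simp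
    qed (simp add: MQQ_def)
    also have "diag_mat MQQ = map (\<lambda>i. 1) [0..<q]"
      by (auto simp: diag_mat_def MQQ_def Mf_diag)
    also have "prod_list (map (\<lambda>i. 1::int) [0..<q]) = 1" by (induct q) auto
    finally show ?thesis .
  qed
  have dM: "det (matg Mf r' c' (n+q) (n+q)) = det X * det MQQ"
    unfolding blk by (rule det_four_block_mat_upper_right_zero) (auto simp: X_def MQQ_def)
  define Z where "Z = Z_mat T"
  have Zc: "Z \<in> carrier_mat n n" unfolding Z_def Z_mat_def using cD n_def U_def D_def by simp
  define s where "s = (\<lambda>i. - ((-1::int)^(snd (snd (W i)))))"
  define t where "t = (\<lambda>j. (-1::int)^(snd (snd (B j))))"
  have Xeq: "X = mat n n (\<lambda>(i,j). s i * t j * transpose_mat Z $$ (i,j))"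
  proof (rule eq_matI)
    fix i j assume "i < dim_row (mat n n (\<lambda>(i,j). s i * t j * transpose_mat Z $$ (i,j)))"
      "j < dim_col (mat n n (\<lambda>(i,j). s i * t j * transpose_mat Z $$ (i,j)))"
    hence ij: "i < n" "j < n" by auto
    have "transpose_mat Z $$ (i,j) = (if shares_edge (Down (B j)) (Up (W i)) then 1 else 0)"
    proof -
      have cc: "card (down_labels T) = n" "card (up_labels T) = n" using cD n_def D_def U_def by auto
      show ?thesis using ij unfolding Z_def Z_mat_def B_def W_def B_tri_def W_tri_def D_def U_def cc by simp
    qed
    thus "X $$ (i,j) = mat n n (\<lambda>(i,j). s i * t j * transpose_mat Z $$ (i,j)) $$ (i,j)"
      using ij unfolding X_def s_def t_def by (simp add: sgnlem)
  qed (auto simp: X_def)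
  have "det X = (\<Prod>i<n. s i) * (\<Prod>j<n. t j) * det (transpose_mat Z)"
    unfolding Xeq by (rule det_scale) (use Zc in simp)
  moreover have "det (transpose_mat Z) = det Z" using det_transpose[OF Zc] .
  moreover have "\<bar>\<Prod>i<n. s i\<bar> = 1" unfolding abs_prod s_def by simp
  moreover have "\<bar>\<Prod>i<n. t i\<bar> = 1" unfolding abs_prod t_def by simp
  ultimately have "\<bar>det X\<bar> = \<bar>det Z\<bar>" by (simp add: abs_mult)
  hence "\<bar>det Z\<bar> = \<bar>det (N_mat T)\<bar>" using J N R dM dQ by simp
  thus ?thesis unfolding Z_def T_def .
qed



lemma sign_transport:
  assumes p: "p permutes {0..<(k::nat)}" and f: "bij_betw f {0..<k} B"
  shows "(\<lambda>x. if x \<in> B then f (p (inv_into {0..<k} f x)) else x) permutes B"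
    and "sign (\<lambda>x. if x \<in> B then f (p (inv_into {0..<k} f x)) else x) = sign p"
proof -
  interpret pb: permutes_bij_finite p "{0..<k}" B f "inv_into {0..<k} f"
    "\<lambda>x. if x \<in> B then f (p (inv_into {0..<k} f x)) else x"
    by unfold_locales (use p f in \<open>auto simp: bij_betw_def\<close>)
  show "(\<lambda>x. if x \<in> B then f (p (inv_into {0..<k} f x)) else x) permutes B"
    using pb.permutes_p' .
  show "sign (\<lambda>x. if x \<in> B then f (p (inv_into {0..<k} f x)) else x) = sign p"
    using pb.sign_p' .
qed

lemma lozenge_shape:
  assumes "lozenge L"
  shows "\<exists>m u. L = {Down m, Up u} \<and> (u = times_x m \<or> u = times_y m \<or> u = times_z m)"
proof -
  obtain t t' where tt: "shares_edge t t'" "L = {t, t'}" using assms lozenge_def by blast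
  show ?thesis
  proof (cases "\<exists>m. t = Down m \<and> t' \<in> {Up (times_x m), Up (times_y m), Up (times_z m)}")
    case True
    then obtain m where m: "t = Down m" "t' \<in> {Up (times_x m), Up (times_y m), Up (times_z m)}" by blast
    thus ?thesis using tt(2) by blast
  next
    case False
    then obtain m where m: "t' = Down m" "t \<in> {Up (times_x m), Up (times_y m), Up (times_z m)}"
      using tt(1) unfolding shares_edge_def by blast
    moreover have "L = {t', t}" using tt(2) by (simp add: insert_commute)
    ultimately show ?thesis by blast
  qed
qed

lemma srel_memI: "x \<in> S - C \<Longrightarrow> h x \<noteq> x \<Longrightarrow> (x, h x) \<in> srel S C h"
  unfolding srel_def by blast

lemma srel_memE: "p \<in> srel S C h \<Longrightarrow> (\<And>x. p = (x, h x) \<Longrightarrow> x \<in> S - C \<Longrightarrow> h x \<noteq> x \<Longrightarrow> P) \<Longrightarrow> P"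
  unfolding srel_def by blast

lemma srel_D: "(x, y) \<in> srel S C h \<Longrightarrow> y = h x \<and> x \<in> S - C \<and> h x \<noteq> x"
  unfolding srel_def by blast

lemma pair_eq: "{Down m, Up u} = {Down m', Up u'} \<longleftrightarrow> m = m' \<and> u = u'"
  by (auto simp: doubleton_eq_iff)

locale tctx =
  fixes d :: nat and I :: "mono set"
  assumes bal: "balanced (T_region d I)"
begin

abbreviation "TT \<equiv> T_region d I"
abbreviation "UU \<equiv> up_labels TT"
abbreviation "DD \<equiv> down_labels TT"
abbreviation "Az \<equiv> times_z ` DD"
abbreviation "AA \<equiv> A_verts TT"
abbreviation "EE \<equiv> E_verts TT"
abbreviation "VV \<equiv> UU \<union> EE"
abbreviation "nn \<equiv> card UU"
abbreviation "mm \<equiv> card AA"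
abbreviation "W \<equiv> rl_nth UU"
abbreviation "B \<equiv> rl_nth DD"
abbreviation "eA \<equiv> rl_nth AA"
abbreviation "eE \<equiv> rl_nth EE"
abbreviation "Winv \<equiv> inv_into {0..<nn} W"
abbreviation "Einv \<equiv> inv_into {0..<mm} eE"

definition Phi :: "mono \<Rightarrow> mono" where
  "Phi v = (if v \<in> UU then times_z (B (Winv v)) else if v \<in> EE then eA (Einv v) else v)"

lemma fU: "finite UU" using finite_up .
lemma fD: "finite DD" using finite_down .
lemma fAz: "finite Az" using fD by simp
lemma Aeq: "AA = UU - Az" by (rule A_verts_eq)
lemma Eeq: "EE = Az - UU" by (rule E_verts_eq)
lemma fA: "finite AA" using fU Aeq by simp
lemma fE: "finite EE" using fAz Eeq by simp
lemma cD: "card DD = nn" using bal unfolding balanced_def by simp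
lemma cAz: "card Az = nn" using cD card_image inj_times_z by (metis inj_on_subset subset_UNIV)
lemma cAE: "card EE = mm"
  unfolding Aeq Eeq card_Diff_subset_Int[OF finite_Int[OF disjI1[OF fU]]] card_Diff_subset_Int[OF finite_Int[OF disjI1[OF fAz]]]
  using cAz by (simp add: Int_commute)
lemma fV: "finite VV" using fU fE by simp

lemma bW: "bij_betw W {0..<nn} UU" using rl_nth_bij[OF fU] .
lemma bB: "bij_betw B {0..<nn} DD" using rl_nth_bij[OF fD] cD by simp
lemma beA: "bij_betw eA {0..<mm} AA" using rl_nth_bij[OF fA] .
lemma beE: "bij_betw eE {0..<mm} EE" using rl_nth_bij[OF fE] cAE by simp
lemma bz: "bij_betw times_z DD Az"
  by (rule inj_on_imp_bij_betw) (use inj_times_z in \<open>auto intro: inj_on_subset\<close>)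

lemma Phi_bijU: "bij_betw Phi UU Az"
proof -
  have "bij_betw (times_z \<circ> B \<circ> Winv) UU Az"
    using bij_betw_trans[OF bij_betw_trans[OF bij_betw_inv_into[OF bW] bB] bz] by (simp add: comp_assoc)
  thus ?thesis by (rule bij_betw_cong[THEN iffD1, rotated]) (auto simp: Phi_def)
qed

lemma Phi_bijE: "bij_betw Phi EE AA"
proof -
  have "bij_betw (eA \<circ> Einv) EE AA"
    using bij_betw_trans[OF bij_betw_inv_into[OF beE] beA] .
  moreover have "v \<in> EE \<Longrightarrow> v \<notin> UU" for v using Eeq by auto
  hence "\<And>v. v \<in> EE \<Longrightarrow> Phi v = (eA \<circ> Einv) v" by (auto simp: Phi_def)
  hence "bij_betw Phi EE AA = bij_betw (eA \<circ> Einv) EE AA" by (rule bij_betw_cong)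
  ultimately show ?thesis by simp
qed

lemma V_eq: "VV = UU \<union> Az" using Eeq by auto

lemma Phi_permutes: "Phi permutes VV"
proof -
  have "bij_betw Phi (UU \<union> EE) (Az \<union> AA)"
    by (rule bij_betw_combine[OF Phi_bijU Phi_bijE]) (use Aeq in auto)
  moreover have "Az \<union> AA = VV" using Aeq V_eq by auto
  ultimately have "bij_betw Phi VV VV" by simp
  thus ?thesis by (rule bij_imp_permutes) (auto simp: Phi_def)
qed

lemma Phi_image: "Phi ` UU = Az" using Phi_bijU by (simp add: bij_betw_def)

lemma Phi_U: "u \<in> UU \<Longrightarrow> Phi u = times_z (B (Winv u))" by (simp add: Phi_def)

lemma Phi_E: "e \<in> EE \<Longrightarrow> Phi e = eA (Einv e)"
  using Eeq by (auto simp: Phi_def)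

definition K0 :: int where
  "K0 = (\<Sum>v\<in>Az. int (snd (snd v))) - (\<Sum>u\<in>UU. int (snd (snd u)))"

end

locale tctx2 = tctx +
  fixes \<tau> :: "tri set set"
  assumes til: "lozenge_tiling (T_region d I) \<tau>"
begin

abbreviation "mt m u \<equiv> {Down m, Up u} \<in> \<tau>"

lemma mt_props: "mt m u \<Longrightarrow> m \<in> DD \<and> u \<in> UU \<and> (u = times_x m \<or> u = times_y m \<or> u = times_z m)"
proof -
  assume a: "mt m u"
  have L: "lozenge {Down m, Up u}" "{Down m, Up u} \<subseteq> TT" using til a unfolding lozenge_tiling_def by auto
  obtain m' u' where mu: "{Down m, Up u} = {Down m', Up u'}" "u' = times_x m' \<or> u' = times_y m' \<or> u' = times_z m'"
    using lozenge_shape[OF L(1)] by blast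
  have "m = m'" "u = u'" using mu(1) pair_eq by auto
  thus ?thesis using mu L(2) by (auto simp: up_labels_def down_labels_def)
qed

lemma tile_of:
  assumes "t \<in> TT"
  obtains m u where "mt m u" "t \<in> {Down m, Up u}"
proof -
  obtain L where L: "L \<in> \<tau>" "t \<in> L" using til assms unfolding lozenge_tiling_def by blast
  have "lozenge L" using til L unfolding lozenge_tiling_def by auto
  then obtain m u where "L = {Down m, Up u}" using lozenge_shape by blast
  thus ?thesis using L that by auto
qed

lemma mt_exD: "mm' \<in> DD \<Longrightarrow> \<exists>u. mt mm' u"
proof -
  assume "mm' \<in> DD"
  hence "Down mm' \<in> TT" by (simp add: down_labels_def)
  then obtain m u where "mt m u" "Down mm' \<in> {Down m, Up u}" by (rule tile_of)
  thus ?thesis by blast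
qed

lemma mt_exU: "u' \<in> UU \<Longrightarrow> \<exists>m. mt m u'"
proof -
  assume "u' \<in> UU"
  hence "Up u' \<in> TT" by (simp add: up_labels_def)
  then obtain m u where "mt m u" "Up u' \<in> {Down m, Up u}" by (rule tile_of)
  thus ?thesis by blast
qed

lemma mt_uniqU: "mt m u \<Longrightarrow> mt m u' \<Longrightarrow> u = u'"
proof -
  assume a: "mt m u" "mt m u'"
  have "Down m \<in> TT" using a mt_props by (simp add: down_labels_def)
  hence "\<exists>!L. L \<in> \<tau> \<and> Down m \<in> L" using til unfolding lozenge_tiling_def by blast
  hence "{Down m, Up u} = {Down m, Up u'}" using a by blast
  thus ?thesis using pair_eq by blast
qed

lemma mt_uniqD: "mt m u \<Longrightarrow> mt m' u \<Longrightarrow> m = m'"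
proof -
  assume a: "mt m u" "mt m' u"
  have "Up u \<in> TT" using a mt_props by (simp add: up_labels_def)
  hence "\<exists>!L. L \<in> \<tau> \<and> Up u \<in> L" using til unfolding lozenge_tiling_def by blast
  hence "{Down m, Up u} = {Down m', Up u}" using a by blast
  thus ?thesis using pair_eq by blast
qed

abbreviation "pp \<equiv> pm_perm TT \<tau>"

lemma W_inj: "i < nn \<Longrightarrow> j < nn \<Longrightarrow> W i = W j \<Longrightarrow> i = j"
  using bW unfolding bij_betw_def inj_on_def by auto

lemma pp_props: "i < nn \<Longrightarrow> pp i < nn \<and> mt (B i) (W (pp i))"
proof -
  assume i: "i < nn"
  have "B i \<in> DD" using bB i by (auto simp: bij_betw_def)
  then obtain u where u: "mt (B i) u" using mt_exD by blast
  have "u \<in> UU" using mt_props[OF u] by simp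
  then obtain k where k: "k < nn" "W k = u" using bW by (force simp: bij_betw_def)
  have "pp i = (THE j. j < nn \<and> mt (B i) (W j))"
    using i cD unfolding pm_perm_def B_tri_def W_tri_def by simp
  also have "\<dots> = k"
  proof (rule the_equality)
    show "k < nn \<and> mt (B i) (W k)" using k u by simp
    fix j assume "j < nn \<and> mt (B i) (W j)"
    hence "W j = u" "j < nn" using mt_uniqU u by blast+
    thus "j = k" using k W_inj by auto
  qed
  finally show ?thesis using k u by simp
qed

lemma pp_permutes: "pp permutes {0..<nn}"
proof -
  have inj: "inj_on pp {0..<nn}"
  proof (rule inj_onI)
    fix i j assume ij: "i \<in> {0..<nn}" "j \<in> {0..<nn}" "pp i = pp j"
    have "mt (B i) (W (pp i))" "mt (B j) (W (pp j))" using pp_props ij(1,2) by auto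
    hence "mt (B i) (W (pp i))" "mt (B j) (W (pp i))" using ij(3) by simp_all
    hence "B i = B j" using mt_uniqD by blast
    thus "i = j" using bB ij unfolding bij_betw_def inj_on_def by auto
  qed
  have "pp ` {0..<nn} \<subseteq> {0..<nn}" using pp_props by auto
  hence "pp ` {0..<nn} = {0..<nn}" using inj
    by (metis card_image card_subset_eq finite_atLeastLessThan)
  hence "bij_betw pp {0..<nn} {0..<nn}" using inj by (simp add: bij_betw_def)
  thus ?thesis by (rule bij_imp_permutes) (auto simp: pm_perm_def cD)
qed

definition Pi' :: "mono \<Rightarrow> mono" where
  "Pi' = (\<lambda>x. if x \<in> UU then W (Hilbert_Choice.inv pp (Winv x)) else x)"

lemma Pi'_props: "Pi' permutes UU" "sign Pi' = sign pp"
proof -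
  have ip: "Hilbert_Choice.inv pp permutes {0..<nn}" using permutes_inv[OF pp_permutes] .
  show "Pi' permutes UU" unfolding Pi'_def by (rule sign_transport(1)[OF ip bW])
  have "sign Pi' = sign (Hilbert_Choice.inv pp)" unfolding Pi'_def by (rule sign_transport(2)[OF ip bW])
  also have "\<dots> = sign pp" by (rule sign_inverse) (use pp_permutes permutation_permutes in blast)
  finally show "sign Pi' = sign pp" .
qed

definition H :: "mono \<Rightarrow> mono" where "H = Phi \<circ> Pi'"

lemma H_permutes: "H permutes VV"
  unfolding H_def by (rule permutes_compose[OF permutes_subset[OF Pi'_props(1)] Phi_permutes]) auto

lemma H_sign: "sign H = sign Phi * sign pp"
proof -
  have "permutation Phi" using Phi_permutes fV permutation_permutes by blast
  moreover have "permutation Pi'" using Pi'_props(1) fU permutation_permutes by blast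
  ultimately show ?thesis unfolding H_def using sign_compose Pi'_props(2) by metis
qed

lemma H_U: "u \<in> UU \<Longrightarrow> \<exists>m. mt m u \<and> H u = times_z m"
proof -
  assume u: "u \<in> UU"
  define k where "k = Winv u"
  have uW: "u \<in> W ` {0..<nn}" using u bW by (simp add: bij_betw_def)
  have k: "k < nn" "W k = u" unfolding k_def
    using inv_into_into[OF uW] f_inv_into_f[OF uW] by auto
  define i where "i = Hilbert_Choice.inv pp k"
  have i: "i < nn" "pp i = k" using permutes_inv[OF pp_permutes] pp_permutes k unfolding i_def
    by (auto simp: permutes_in_image permutes_inverses)
  have "Pi' u = W i" using u unfolding Pi'_def k_def i_def by simp
  moreover have "W i \<in> UU" using i bW by (auto simp: bij_betw_def)
  moreover have "Winv (W i) = i" using i bW by (auto simp: bij_betw_def inv_into_f_f)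
  ultimately have "H u = times_z (B i)" unfolding H_def by (simp add: Phi_U)
  moreover have "mt (B i) u" using pp_props[OF i(1)] i k by simp
  ultimately show ?thesis by blast
qed

lemma H_E: "e \<in> EE \<Longrightarrow> H e = eA (Einv e)"
proof -
  assume e: "e \<in> EE"
  hence "e \<notin> UU" using Eeq by auto
  hence "Pi' e = e" by (simp add: Pi'_def)
  thus ?thesis using Phi_E e by (simp add: H_def)
qed

lemma H_in_Az: "u \<in> UU \<Longrightarrow> H u \<in> Az"
  using H_U mt_props by blast

abbreviation "R \<equiv> srel VV EE H"

lemma R_eq: "R = lp_step \<tau>"
proof (rule Set.set_eqI, rule iffI)
  fix p assume "p \<in> R"
  then obtain x where x: "p = (x, H x)" "x \<in> VV - EE" "H x \<noteq> x" by (rule srel_memE)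
  have "x \<in> UU" using x by auto
  then obtain m where m: "mt m x" "H x = times_z m" using H_U by blast
  hence "p = (x, times_z m)" "x \<noteq> times_z m" using x by auto
  thus "p \<in> lp_step \<tau>" using m unfolding lp_step_def by blast
next
  fix p assume "p \<in> lp_step \<tau>"
  then obtain u m where um: "p = (u, times_z m)" "mt m u" "u \<noteq> times_z m" unfolding lp_step_def by blast
  have u: "u \<in> UU" using mt_props[OF um(2)] by simp
  then obtain m' where "mt m' u" "H u = times_z m'" using H_U by blast
  hence "H u = times_z m" using mt_uniqD um(2) by blast
  moreover have "u \<notin> EE" using u Eeq by auto
  ultimately have "p = (u, H u)" "u \<in> VV - EE" "H u \<noteq> u" using um u by auto
  thus "p \<in> R" using srel_memI by metis
qed

lemma rho_step: "x \<in> UU \<Longrightarrow> H x \<noteq> x \<Longrightarrow> snd (snd (H x)) = Suc (snd (snd x))"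
proof -
  assume x: "x \<in> UU" "H x \<noteq> x"
  then obtain m where m: "mt m x" "H x = times_z m" using H_U by blast
  have "x = times_x m \<or> x = times_y m" using mt_props[OF m(1)] m x by auto
  thus ?thesis using m by (cases m) auto
qed

lemma rho_fix: "x \<in> UU \<Longrightarrow> H x = x \<Longrightarrow> snd (snd (H x)) = snd (snd x)"
  by simp

lemma VV_deg: "v \<in> VV \<Longrightarrow> mdeg v + 1 = d"
  using V_eq by (auto simp: up_labels_T down_labels_T)

lemma H_inj: "H x = H y \<Longrightarrow> x = y"
  using H_permutes by (metis permutes_inj inj_eq)

lemma reach: "x \<in> EE \<or> (x \<in> UU \<and> H x \<noteq> x) \<Longrightarrow> \<exists>e\<in>EE. (x, e) \<in> R\<^sup>*"
proof (induction x rule: measure_induct_rule[where f="\<lambda>x. d - snd (snd x)"])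
  case (less x)
  show ?case
  proof (cases "x \<in> EE")
    case True thus ?thesis by blast
  next
    case False
    hence x: "x \<in> UU" "H x \<noteq> x" using less.prems by auto
    have hxV: "H x \<in> VV" using H_permutes x(1) permutes_in_image[of H VV x] by blast
    have r: "snd (snd (H x)) = Suc (snd (snd x))" using rho_step x by blast
    have "mdeg (H x) + 1 = d" using VV_deg hxV by blast
    hence "snd (snd (H x)) < d" by (cases "H x") auto
    hence lt: "d - snd (snd (H x)) < d - snd (snd x)" using r by simp
    have "H (H x) \<noteq> H x" using x H_inj by metis
    hence "H x \<in> EE \<or> (H x \<in> UU \<and> H (H x) \<noteq> H x)" using hxV by auto
    then obtain e where "e \<in> EE" "(H x, e) \<in> R\<^sup>*" using less.IH[OF lt] by blast
    moreover have "(x, H x) \<in> R" using x False by (intro srel_memI) auto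
    ultimately show ?thesis by (meson converse_rtrancl_into_rtrancl)
  qed
qed

lemma R_func: "(x, y) \<in> R \<Longrightarrow> (x, y') \<in> R \<Longrightarrow> y = y'"
  using srel_D by metis

lemma R_inj: "(x, y) \<in> R \<Longrightarrow> (x', y) \<in> R \<Longrightarrow> x = x'"
  using srel_D H_inj by metis

lemma fwd_uniq: "(x, e) \<in> R\<^sup>* \<Longrightarrow> e \<in> EE \<Longrightarrow> (x, e') \<in> R\<^sup>* \<Longrightarrow> e' \<in> EE \<Longrightarrow> e = e'"
proof (induction arbitrary: e' rule: converse_rtrancl_induct)
  case base
  thus ?case using srel_from_C by metis
next
  case (step x y)
  have "x \<notin> EE" using step(1) srel_no_C by metis
  hence "x \<noteq> e'" using step.prems(3) by blast
  then obtain y' where y': "(x, y') \<in> R" "(y', e') \<in> R\<^sup>*" using step.prems(2) by (metis converse_rtranclE)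
  hence "y' = y" using R_func step(1) by blast
  hence "(y, e') \<in> R\<^sup>*" using y'(2) by simp
  thus ?case using step.IH step.prems(1,3) by blast
qed

definition nopred :: "mono \<Rightarrow> bool" where "nopred a = (\<forall>x. (x, a) \<notin> R)"

lemma bwd_uniq: "(a, e) \<in> R\<^sup>* \<Longrightarrow> (a', e) \<in> R\<^sup>* \<Longrightarrow> nopred a \<Longrightarrow> nopred a' \<Longrightarrow> a = a'"
proof (induction arbitrary: a' rule: rtrancl_induct)
  case base
  show ?case
  proof (rule ccontr)
    assume "a \<noteq> a'"
    hence "a' \<noteq> a" by simp
    then obtain y where "(y, a) \<in> R" using base(1) by (metis rtranclE)
    thus False using base(2) unfolding nopred_def by blast
  qed
next
  case (step y e)
  have "a' \<noteq> e" using step(2) step.prems(3) unfolding nopred_def by blast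
  then obtain y' where "(a', y') \<in> R\<^sup>*" "(y', e) \<in> R" using step.prems(1) by (metis rtranclE)
  hence "y' = y" using R_inj step(2) by blast
  thus ?case using step.IH step.prems(2,3) \<open>(a', y') \<in> R\<^sup>*\<close> by blast
qed

lemma A_nopred: "a \<in> AA \<Longrightarrow> nopred a"
proof -
  assume a: "a \<in> AA"
  { fix x assume "(x, a) \<in> R"
    then have "x \<in> VV - EE" "a = H x" using srel_D by metis+
    hence "x \<in> UU" "a = H x" by auto
    hence "a \<in> Az" using H_in_Az by simp
    hence False using a Aeq by auto }
  thus ?thesis unfolding nopred_def by blast
qed

lemma A_start: "a \<in> AA \<Longrightarrow> a \<in> UU \<and> H a \<noteq> a"
proof -
  assume a: "a \<in> AA"
  hence aa: "a \<in> UU" "a \<notin> Az" using Aeq by auto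
  hence "H a \<in> Az" using H_in_Az by blast
  hence "H a \<noteq> a" using aa by metis
  thus ?thesis using aa by blast
qed

abbreviation "ll \<equiv> lp_perm TT \<tau>"

lemma eE_inj: "i < mm \<Longrightarrow> j < mm \<Longrightarrow> eE i = eE j \<Longrightarrow> i = j"
  using beE unfolding bij_betw_def inj_on_def by auto

lemma ll_props: "i < mm \<Longrightarrow> ll i < mm \<and> (eA i, eE (ll i)) \<in> R\<^sup>*"
proof -
  assume i: "i < mm"
  have "eA i \<in> AA" using i beA by (auto simp: bij_betw_def)
  then obtain e where e: "e \<in> EE" "(eA i, e) \<in> R\<^sup>*" using reach A_start by blast
  then obtain k where k: "k < mm" "eE k = e" using beE by (force simp: bij_betw_def)
  have "ll i = (THE j. j < mm \<and> (eA i, eE j) \<in> R\<^sup>*)"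
    using i cAE unfolding lp_perm_def A_pt_def E_pt_def R_eq by simp
  also have "\<dots> = k"
  proof (rule the_equality)
    show "k < mm \<and> (eA i, eE k) \<in> R\<^sup>*" using k e by simp
    fix j assume j: "j < mm \<and> (eA i, eE j) \<in> R\<^sup>*"
    have "eE j \<in> EE" using j beE by (auto simp: bij_betw_def)
    hence "eE j = e" using fwd_uniq j e by blast
    thus "j = k" using k j eE_inj by auto
  qed
  finally show ?thesis using k e by simp
qed

lemma ll_permutes: "ll permutes {0..<mm}"
proof -
  have inj: "inj_on ll {0..<mm}"
  proof (rule inj_onI)
    fix i j assume ij: "i \<in> {0..<mm}" "j \<in> {0..<mm}" "ll i = ll j"
    have "(eA i, eE (ll i)) \<in> R\<^sup>*" "(eA j, eE (ll j)) \<in> R\<^sup>*" using ll_props ij(1,2) by auto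
    hence "(eA i, eE (ll i)) \<in> R\<^sup>*" "(eA j, eE (ll i)) \<in> R\<^sup>*" using ij(3) by simp_all
    moreover have "eA i \<in> AA" "eA j \<in> AA" using ij beA by (auto simp: bij_betw_def)
    ultimately have "eA i = eA j" using bwd_uniq A_nopred by blast
    thus "i = j" using beA ij unfolding bij_betw_def inj_on_def by auto
  qed
  have "ll ` {0..<mm} \<subseteq> {0..<mm}" using ll_props by auto
  hence "ll ` {0..<mm} = {0..<mm}" using inj
    by (metis card_image card_subset_eq finite_atLeastLessThan)
  hence "bij_betw ll {0..<mm} {0..<mm}" using inj by (simp add: bij_betw_def)
  thus ?thesis by (rule bij_imp_permutes) (auto simp: lp_perm_def)
qed

definition Lam :: "mono \<Rightarrow> mono" where
  "Lam = (\<lambda>x. if x \<in> EE then eE (ll (Einv x)) else x)"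

lemma Lam_props: "Lam permutes EE" "sign Lam = sign ll"
  unfolding Lam_def using sign_transport[OF ll_permutes beE] by auto

lemma splice_app: "sign H = (-1) ^ (card {x \<in> VV - EE. H x \<noteq> x}) * sign Lam"
proof (rule splice[OF fV _ Lam_props(1) H_permutes])
  show "EE \<subseteq> VV" by simp
  show "\<forall>x\<in>VV - EE. H x \<noteq> x \<longrightarrow> snd (snd x) < snd (snd (H x))"
    using rho_step by auto
  show "\<forall>c\<in>EE. (H c, Lam c) \<in> R\<^sup>*"
  proof
    fix c assume c: "c \<in> EE"
    define j where "j = Einv c"
    have cW: "c \<in> eE ` {0..<mm}" using c beE by (simp add: bij_betw_def)
    have j: "j < mm" "eE j = c" unfolding j_def
      using inv_into_into[OF cW] f_inv_into_f[OF cW] by auto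
    have "H c = eA j" using H_E c j_def by simp
    moreover have "Lam c = eE (ll j)" using c by (simp add: Lam_def j_def)
    ultimately show "(H c, Lam c) \<in> R\<^sup>*" using ll_props[OF j(1)] by simp
  qed
qed

lemma count_eq: "int (card {x \<in> VV - EE. H x \<noteq> x}) = K0"
proof -
  have VE: "VV - EE = UU" using Eeq by auto
  have tm: "u \<in> UU \<Longrightarrow> int (snd (snd (H u))) - int (snd (snd u)) = (if H u \<noteq> u then 1 else 0)" for u
    using rho_step by auto
  have "int (card {x \<in> UU. H x \<noteq> x}) = (\<Sum>u\<in>UU. (if H u \<noteq> u then 1 else 0))"
    using fU by (simp add: sum.If_cases Int_def conj_commute)
  also have "\<dots> = (\<Sum>u\<in>UU. int (snd (snd (H u))) - int (snd (snd u)))"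
    using tm by simp
  also have "\<dots> = (\<Sum>u\<in>UU. int (snd (snd (H u)))) - (\<Sum>u\<in>UU. int (snd (snd u)))"
    by (simp add: sum_subtractf)
  also have "(\<Sum>u\<in>UU. int (snd (snd (H u)))) = (\<Sum>v\<in>H ` UU. int (snd (snd v)))"
    using H_inj by (subst sum.reindex) (auto simp: inj_on_def)
  also have "H ` UU = Az"
  proof -
    have "Pi' ` UU = UU" using permutes_image[OF Pi'_props(1)] .
    thus ?thesis unfolding H_def image_comp[symmetric] using Phi_image by simp
  qed
  finally show ?thesis unfolding VE K0_def .
qed

lemma main1: "sgn_pm TT \<tau> * sgn_lp TT \<tau> = sign Phi * (-1) ^ (nat K0)"
proof -
  have k: "card {x \<in> VV - EE. H x \<noteq> x} = nat K0" using count_eq by linarith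
  have e1: "sign H = sign Phi * sign pp" by (rule H_sign)
  have e2: "sign H = (-1) ^ (nat K0) * sign ll" using splice_app k Lam_props(2) by simp
  have sq: "sign Phi * sign Phi = 1" "sign ll * sign ll = 1" by simp_all
  have "sign pp * sign ll = sign Phi * (sign Phi * sign pp) * sign ll" using sq by (simp add: algebra_simps)
  also have "\<dots> = sign Phi * ((-1) ^ (nat K0) * sign ll) * sign ll" using e1 e2 by simp
  also have "\<dots> = sign Phi * (-1) ^ (nat K0) * (sign ll * sign ll)" by (simp add: algebra_simps)
  finally show ?thesis unfolding sgn_pm_def sgn_lp_def using sq by simp
qed

end

lemma part1:
  assumes bal: "balanced (T_region d I)"
    and t1: "lozenge_tiling (T_region d I) \<tau>" and t2: "lozenge_tiling (T_region d I) \<tau>'"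
  shows "sgn_pm (T_region d I) \<tau> * sgn_lp (T_region d I) \<tau> =
         sgn_pm (T_region d I) \<tau>' * sgn_lp (T_region d I) \<tau>'"
proof -
  interpret a: tctx2 d I \<tau> by unfold_locales (use bal t1 in auto)
  interpret b: tctx2 d I \<tau>' by unfold_locales (use bal t2 in auto)
  show ?thesis using a.main1 b.main1 by simp
qed


theorem theorem4p6:
  fixes d :: nat and I :: "mono set"
  assumes "monomial_ideal I"
    and "balanced (T_region d I)"
  shows "(\<forall>\<tau> \<tau>'. lozenge_tiling (T_region d I) \<tau> \<longrightarrow> lozenge_tiling (T_region d I) \<tau>' \<longrightarrow>
            sgn_pm (T_region d I) \<tau> * sgn_lp (T_region d I) \<tau> =
            sgn_pm (T_region d I) \<tau>' * sgn_lp (T_region d I) \<tau>')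
       \<and> \<bar>det (Z_mat (T_region d I))\<bar> = \<bar>det (N_mat (T_region d I))\<bar>"
  using part1[OF assms(2)] part2[OF assms] by blast

end
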